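(* (1) For every non-empty set $A$ and every mapping $\varphi: A\to\mathbb{M}_A$ in E-form, the magma $\mathbb{E}(\varphi)$ is equidecomposable. (2) Every finitely presented equidecomposable magma $M$ is isomorphic to $\mathbb{E}(\varphi)$ for some non-empty set $A$ and some mapping $\varphi: A\to \mathbb{M}_A$ in E-form.
   Context: A magma is a set with a binary operation $+$. A magma $M$ is equidecomposable if for all $x,y,x',y'\in M$, $x+y=x'+y'$ implies $x=x'$ and $y=y'$. For a non-empty set $A$, $\mathbb{M}_A$ is the free magma on $A$ (non-associative words over $A$, with $x+y=(x,y)$). For $y\in\mathbb{M}_A$, $g(y)\subseteq A$ is the set of letters of $A$ occurring in $y$. A mapping $\varphi: A\to\mathbb{M}_A$ is in E-form if it is injective and $a\in g(\varphi(a))$ for every $a\in A$. For a magma $M$, $M^2$ has the componentwise operation. A congruence on $M$ is an equivalence relation that is a submagma of $M^2$; it is closed if $(x+x',y+y')\in\theta$ implies $(x,y),(x',y')\in\theta$. For $X\subseteq M^2$, $\boxminus(X)$ is the least closed congruence on $M$ containing $X$. Regarding $\varphi$ as $\{(a,\varphi(a)):a\in A\}\subseteq\mathbb{M}_A^2$, put $\mathbb{E}(\varphi)=\mathbb{M}_A/\boxminus(\varphi)$. A presentation is a pair $(A\mid R)$ with $A$ a non-empty set and $R\subseteq\mathbb{M}_A^2$; it defines the magma $\langle A\mid R\rangle=\mathbb{M}_A/\boxminus(R)$. An equidecomposable magma $M$ is finitely presented if $M\cong\langle A\mid R\rangle$ for some presentation with $A$ and $R$ finite. *)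

theory Defs
  imports Main
begin

datatype 'a fm = Gen 'a | Op "'a fm" "'a fm"

primrec letters :: "'a fm \<Rightarrow> 'a set" where
  "letters (Gen a) = {a}"
| "letters (Op x y) = letters x \<union> letters y"

definition free_magma :: "'a set \<Rightarrow> 'a fm set \<times> ('a fm \<Rightarrow> 'a fm \<Rightarrow> 'a fm)" where
  "free_magma A = ({t. letters t \<subseteq> A}, Op)"

type_synonym 'm magma = "'m set \<times> ('m \<Rightarrow> 'm \<Rightarrow> 'm)"

definition carrier :: "'m magma \<Rightarrow> 'm set" where "carrier M = fst M"
definition mop :: "'m magma \<Rightarrow> 'm \<Rightarrow> 'm \<Rightarrow> 'm" where "mop M = snd M"

definition magma :: "'m magma \<Rightarrow> bool" where
  "magma M \<longleftrightarrow> (\<forall>x\<in>carrier M. \<forall>y\<in>carrier M. mop M x y \<in> carrier M)"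

definition equidecomposable :: "'m magma \<Rightarrow> bool" where
  "equidecomposable M \<longleftrightarrow>
     (\<forall>x\<in>carrier M. \<forall>y\<in>carrier M. \<forall>x'\<in>carrier M. \<forall>y'\<in>carrier M.
        mop M x y = mop M x' y' \<longrightarrow> x = x' \<and> y = y')"

definition magma_iso :: "'m magma \<Rightarrow> 'n magma \<Rightarrow> bool" where
  "magma_iso M N \<longleftrightarrow> (\<exists>f. bij_betw f (carrier M) (carrier N) \<and>
     (\<forall>x\<in>carrier M. \<forall>y\<in>carrier M. f (mop M x y) = mop N (f x) (f y)))"

definition congruence :: "'m magma \<Rightarrow> 'm rel \<Rightarrow> bool" where
  "congruence M \<theta> \<longleftrightarrow> equiv (carrier M) \<theta> \<and>
     (\<forall>(x,y)\<in>\<theta>. \<forall>(x',y')\<in>\<theta>. (mop M x x', mop M y y') \<in> \<theta>)"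

definition closed_congruence :: "'m magma \<Rightarrow> 'm rel \<Rightarrow> bool" where
  "closed_congruence M \<theta> \<longleftrightarrow> congruence M \<theta> \<and>
     (\<forall>x\<in>carrier M. \<forall>y\<in>carrier M. \<forall>x'\<in>carrier M. \<forall>y'\<in>carrier M.
        (mop M x x', mop M y y') \<in> \<theta> \<longrightarrow> (x,y) \<in> \<theta> \<and> (x',y') \<in> \<theta>)"

definition closed_cong_gen :: "'m magma \<Rightarrow> 'm rel \<Rightarrow> 'm rel" where
  "closed_cong_gen M X = \<Inter>{\<theta>. closed_congruence M \<theta> \<and> X \<subseteq> \<theta>}"

definition quotient_magma :: "'m magma \<Rightarrow> 'm rel \<Rightarrow> 'm set magma" where
  "quotient_magma M \<theta> = (carrier M // \<theta>,
     (\<lambda>X Y. \<theta> `` {mop M (SOME x. x \<in> X) (SOME y. y \<in> Y)}))"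

definition E_form :: "'a set \<Rightarrow> ('a \<Rightarrow> 'a fm) \<Rightarrow> bool" where
  "E_form A \<phi> \<longleftrightarrow> (\<forall>a\<in>A. \<phi> a \<in> carrier (free_magma A)) \<and> inj_on \<phi> A \<and>
     (\<forall>a\<in>A. a \<in> letters (\<phi> a))"

definition graph_rel :: "'a set \<Rightarrow> ('a \<Rightarrow> 'a fm) \<Rightarrow> 'a fm rel" where
  "graph_rel A \<phi> = {(Gen a, \<phi> a) | a. a \<in> A}"

definition E_magma :: "'a set \<Rightarrow> ('a \<Rightarrow> 'a fm) \<Rightarrow> 'a fm set magma" where
  "E_magma A \<phi> = quotient_magma (free_magma A) (closed_cong_gen (free_magma A) (graph_rel A \<phi>))"

definition presented :: "'a set \<Rightarrow> 'a fm rel \<Rightarrow> 'a fm set magma" where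
  "presented A R = quotient_magma (free_magma A) (closed_cong_gen (free_magma A) R)"

text \<open>Finite presentations; a finite generator set may w.l.o.g. be taken inside nat.\<close>
definition finitely_presented :: "'m magma \<Rightarrow> bool" where
  "finitely_presented M \<longleftrightarrow> (\<exists>(A::nat set) R. A \<noteq> {} \<and> finite A \<and> finite R \<and>
     R \<subseteq> carrier (free_magma A) \<times> carrier (free_magma A) \<and> magma_iso M (presented A R))"

end

theory Submission
  imports Defs "HOL-Library.Product_Lexorder"
begin

abbreviation FC :: "'a set \<Rightarrow> 'a fm set" where "FC A \<equiv> {t. letters t \<subseteq> A}"

inductive_set cc :: "'a set \<Rightarrow> 'a fm rel \<Rightarrow> 'a fm rel" for A R where
  ccbase: "p \<in> R \<Longrightarrow> p \<in> cc A R"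
| ccrefl: "letters u \<subseteq> A \<Longrightarrow> (u,u) \<in> cc A R"
| ccsym: "(u,v) \<in> cc A R \<Longrightarrow> (v,u) \<in> cc A R"
| cctrans: "(u,v) \<in> cc A R \<Longrightarrow> (v,w) \<in> cc A R \<Longrightarrow> (u,w) \<in> cc A R"
| cccomp: "(x,y) \<in> cc A R \<Longrightarrow> (x',y') \<in> cc A R \<Longrightarrow> (Op x x', Op y y') \<in> cc A R"
| ccdl: "(Op x x', Op y y') \<in> cc A R \<Longrightarrow> (x,y) \<in> cc A R"
| ccdr: "(Op x x', Op y y') \<in> cc A R \<Longrightarrow> (x',y') \<in> cc A R"

lemma cc_sub_p:
  assumes R: "R \<subseteq> FC A \<times> FC A" and p: "p \<in> cc A R"
  shows "letters (fst p) \<subseteq> A \<and> letters (snd p) \<subseteq> A"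
  using p
proof (induction rule: cc.induct)
  case (ccbase p)
  then have "p \<in> FC A \<times> FC A" using R by blast
  then show ?case by (simp add: mem_Times_iff)
next
  case (ccrefl u) then show ?case by simp
next
  case (ccsym u v) then show ?case by simp
next
  case (cctrans u v w) then show ?case by simp
next
  case (cccomp x y x' y') then show ?case by simp
next
  case (ccdl x x' y y') then show ?case by simp
next
  case (ccdr x x' y y') then show ?case by simp
qed

lemma cc_sub: "R \<subseteq> FC A \<times> FC A \<Longrightarrow> (u,v) \<in> cc A R \<Longrightarrow> letters u \<subseteq> A \<and> letters v \<subseteq> A"
  using cc_sub_p[of R A "(u,v)"] by simp

lemma cc_sub': assumes R: "R \<subseteq> FC A \<times> FC A" shows "cc A R \<subseteq> FC A \<times> FC A"
proof (rule subsetI)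
  fix p assume p: "p \<in> cc A R"
  show "p \<in> FC A \<times> FC A" using cc_sub_p[OF R p] by (cases p) simp
qed

lemma free_simps[simp]: "carrier (free_magma A) = FC A" "mop (free_magma A) = Op"
  by (auto simp: carrier_def mop_def free_magma_def)

lemma cc_equiv: assumes R: "R \<subseteq> FC A \<times> FC A" shows "equiv (FC A) (cc A R)"
proof (rule equivI)
  show "cc A R \<subseteq> FC A \<times> FC A" by (rule cc_sub'[OF R])
  show "refl_on (FC A) (cc A R)"
    unfolding refl_on_def using cc_sub'[OF R] by (auto intro: ccrefl)
  show "sym (cc A R)" by (rule symI) (rule ccsym)
  show "trans (cc A R)" by (rule transI) (rule cctrans)
qed

lemma cc_closed: assumes R: "R \<subseteq> FC A \<times> FC A" shows "closed_congruence (free_magma A) (cc A R)"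
  unfolding closed_congruence_def congruence_def
proof (intro conjI)
  show "equiv (carrier (free_magma A)) (cc A R)" using cc_equiv[OF R] by simp
  show "\<forall>(x, y)\<in>cc A R. \<forall>(x', y')\<in>cc A R. (mop (free_magma A) x x', mop (free_magma A) y y') \<in> cc A R"
    by (clarsimp intro!: cccomp)
  show "\<forall>x\<in>carrier (free_magma A). \<forall>y\<in>carrier (free_magma A). \<forall>x'\<in>carrier (free_magma A). \<forall>y'\<in>carrier (free_magma A).
       (mop (free_magma A) x x', mop (free_magma A) y y') \<in> cc A R \<longrightarrow> (x, y) \<in> cc A R \<and> (x', y') \<in> cc A R"
    unfolding free_simps
    apply (intro ballI impI conjI)
     apply (erule ccdl)
    apply (erule ccdr)
    done
qed

lemma cc_least: "closed_congruence (free_magma A) \<theta> \<Longrightarrow> R \<subseteq> \<theta> \<Longrightarrow> cc A R \<subseteq> \<theta>"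
proof
  fix p assume cl: "closed_congruence (free_magma A) \<theta>" and R: "R \<subseteq> \<theta>" and p: "p \<in> cc A R"
  have eq: "equiv (FC A) \<theta>" and cp: "\<forall>(x,y)\<in>\<theta>. \<forall>(x',y')\<in>\<theta>. (Op x x', Op y y') \<in> \<theta>"
    and dc: "\<forall>x\<in>FC A. \<forall>y\<in>FC A. \<forall>x'\<in>FC A. \<forall>y'\<in>FC A. (Op x x', Op y y') \<in> \<theta> \<longrightarrow> (x,y) \<in> \<theta> \<and> (x',y') \<in> \<theta>"
    using cl unfolding closed_congruence_def congruence_def free_simps by blast+
  have sub: "\<theta> \<subseteq> FC A \<times> FC A" using eq unfolding equiv_def refl_on_def by auto
  from p show "p \<in> \<theta>"
  proof (induction rule: cc.induct)
    case (ccbase p) then show ?case using R by auto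
  next
    case (ccrefl u) then show ?case using eq unfolding equiv_def refl_on_def by auto
  next
    case (ccsym u v) then show ?case using eq unfolding equiv_def sym_def by auto
  next
    case (cctrans u v w) then show ?case using eq unfolding equiv_def trans_def by blast
  next
    case (cccomp x y x' y') then show ?case using cp by auto
  next
    case (ccdl x x' y y')
    then have "(Op x x', Op y y') \<in> FC A \<times> FC A" using sub by blast
    then have "Op x x' \<in> FC A" "Op y y' \<in> FC A" by auto
    then have "x \<in> FC A" "x' \<in> FC A" "y \<in> FC A" "y' \<in> FC A" by auto
    then show ?case using dc ccdl by blast
  next
    case (ccdr x x' y y')
    then have "(Op x x', Op y y') \<in> FC A \<times> FC A" using sub by blast
    then have "Op x x' \<in> FC A" "Op y y' \<in> FC A" by auto
    then have "x \<in> FC A" "x' \<in> FC A" "y \<in> FC A" "y' \<in> FC A" by auto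
    then show ?case using dc ccdr by blast
  qed
qed

lemma ccg: "R \<subseteq> FC A \<times> FC A \<Longrightarrow> closed_cong_gen (free_magma A) R = cc A R"
  unfolding closed_cong_gen_def
  apply (rule antisym)
   apply (rule Inter_lower, simp add: cc_closed ccbase subsetI)
  apply (rule Inter_greatest, simp add: cc_least)
  done

lemma cc_mono_rel: "R \<subseteq> cc A R' \<Longrightarrow> cc A R \<subseteq> cc A R'"
proof
  fix p assume R: "R \<subseteq> cc A R'" and "p \<in> cc A R"
  from \<open>p \<in> cc A R\<close> show "p \<in> cc A R'"
  proof (induction rule: cc.induct)
    case (ccbase p) then show ?case using R by blast
  qed (auto intro: cc.intros)
qed

lemma cc_eqI: "R \<subseteq> cc A R' \<Longrightarrow> R' \<subseteq> cc A R \<Longrightarrow> cc A R = cc A R'"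
  using cc_mono_rel by blast

lemma class_some:
  assumes "R \<subseteq> FC A \<times> FC A" "X \<in> FC A // cc A R"
  shows "(SOME x. x \<in> X) \<in> X" "cc A R `` {SOME x. x \<in> X} = X" "(SOME x. x \<in> X) \<in> FC A"
proof -
  have eq: "equiv (FC A) (cc A R)" using cc_equiv assms(1) .
  obtain x where x: "x \<in> FC A" "X = cc A R `` {x}" using assms(2) by (auto elim: quotientE)
  have "x \<in> X" using x equiv_class_self[OF eq x(1)] by simp
  then show s: "(SOME x. x \<in> X) \<in> X" by (rule someI)
  then show "cc A R `` {SOME x. x \<in> X} = X" using x eq by (metis equiv_class_eq Image_singleton_iff)
  show "(SOME x. x \<in> X) \<in> FC A" using s x cc_sub[OF assms(1)] by auto
qed

lemma mop_class:
  assumes R: "R \<subseteq> FC A \<times> FC A" and x: "x \<in> FC A" and y: "y \<in> FC A"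
  shows "mop (quotient_magma (free_magma A) (cc A R)) (cc A R `` {x}) (cc A R `` {y}) = cc A R `` {Op x y}"
proof -
  have eq: "equiv (FC A) (cc A R)" using cc_equiv R .
  have X: "cc A R `` {x} \<in> FC A // cc A R" using x by (rule quotientI)
  have Y: "cc A R `` {y} \<in> FC A // cc A R" using y by (rule quotientI)
  let ?x0 = "SOME z. z \<in> cc A R `` {x}" and ?y0 = "SOME z. z \<in> cc A R `` {y}"
  have "(x, ?x0) \<in> cc A R" "(y, ?y0) \<in> cc A R" using class_some(1)[OF R X] class_some(1)[OF R Y] by auto
  then have "(Op ?x0 ?y0, Op x y) \<in> cc A R" by (auto intro: cccomp ccsym)
  then show ?thesis unfolding quotient_magma_def mop_def free_magma_def using eq by (simp add: equiv_class_eq)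
qed

lemma quot_carrier[simp]: "carrier (quotient_magma M \<theta>) = carrier M // \<theta>"
  by (simp add: quotient_magma_def carrier_def)

lemma quot_equidec:
  assumes R: "R \<subseteq> FC A \<times> FC A"
  shows "equidecomposable (quotient_magma (free_magma A) (cc A R))"
  unfolding equidecomposable_def
proof (intro ballI impI)
  let ?Q = "quotient_magma (free_magma A) (cc A R)"
  have eq: "equiv (FC A) (cc A R)" using cc_equiv R .
  fix X Y X' Y' assume XX: "X \<in> carrier ?Q" "Y \<in> carrier ?Q" "X' \<in> carrier ?Q" "Y' \<in> carrier ?Q"
    and m: "mop ?Q X Y = mop ?Q X' Y'"
  obtain x where x: "x \<in> FC A" "X = cc A R `` {x}" using XX(1) by (auto elim: quotientE)
  obtain y where y: "y \<in> FC A" "Y = cc A R `` {y}" using XX(2) by (auto elim: quotientE)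
  obtain x' where x': "x' \<in> FC A" "X' = cc A R `` {x'}" using XX(3) by (auto elim: quotientE)
  obtain y' where y': "y' \<in> FC A" "Y' = cc A R `` {y'}" using XX(4) by (auto elim: quotientE)
  have "cc A R `` {Op x y} = cc A R `` {Op x' y'}" using m x y x' y' mop_class[OF R] by metis
  then have "(Op x y, Op x' y') \<in> cc A R" using eq x y x' y' by (subst (asm) eq_equiv_class_iff) auto
  then have "(x,x') \<in> cc A R" "(y,y') \<in> cc A R" by (auto intro: ccdl ccdr)
  then show "X = X' \<and> Y = Y'" using x y x' y' eq by (simp add: equiv_class_eq)
qed



lemma iso_trans:
  assumes "magma_iso M N" "magma_iso N P" shows "magma_iso M P"
proof -
  obtain f where f: "bij_betw f (carrier M) (carrier N)"
    "\<forall>x\<in>carrier M. \<forall>y\<in>carrier M. f (mop M x y) = mop N (f x) (f y)"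
    using assms(1) unfolding magma_iso_def by blast
  obtain g where g: "bij_betw g (carrier N) (carrier P)"
    "\<forall>x\<in>carrier N. \<forall>y\<in>carrier N. g (mop N x y) = mop P (g x) (g y)"
    using assms(2) unfolding magma_iso_def by blast
  have "bij_betw (g \<circ> f) (carrier M) (carrier P)" using f(1) g(1) by (rule bij_betw_trans)
  moreover have "\<forall>x\<in>carrier M. \<forall>y\<in>carrier M. (g \<circ> f) (mop M x y) = mop P ((g \<circ> f) x) ((g \<circ> f) y)"
    using f g bij_betwE[OF f(1)] by simp
  ultimately show ?thesis unfolding magma_iso_def by blast
qed

lemma iso_quot:
  fixes f g :: "'a fm \<Rightarrow> 'a fm"
  assumes R: "R \<subseteq> FC A \<times> FC A" and R': "R' \<subseteq> FC A' \<times> FC A'"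
    and hf: "\<And>x y. f (Op x y) = Op (f x) (f y)"
    and fC: "\<And>u. u \<in> FC A \<Longrightarrow> f u \<in> FC A'"
    and gC: "\<And>u. u \<in> FC A' \<Longrightarrow> g u \<in> FC A"
    and ft: "\<And>u v. (u,v) \<in> cc A R \<Longrightarrow> (f u, f v) \<in> cc A' R'"
    and gt: "\<And>u v. (u,v) \<in> cc A' R' \<Longrightarrow> (g u, g v) \<in> cc A R"
    and gf: "\<And>u. u \<in> FC A \<Longrightarrow> (g (f u), u) \<in> cc A R"
    and fg: "\<And>u. u \<in> FC A' \<Longrightarrow> (f (g u), u) \<in> cc A' R'"
  shows "magma_iso (quotient_magma (free_magma A) (cc A R)) (quotient_magma (free_magma A') (cc A' R'))"
proof -
  let ?t = "cc A R" and ?t' = "cc A' R'"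
  have eq: "equiv (FC A) ?t" using cc_equiv R .
  have eq': "equiv (FC A') ?t'" using cc_equiv R' .
  define F where "F X = ?t' `` {f (SOME x. x \<in> X)}" for X
  have Fc: "F (?t `` {x}) = ?t' `` {f x}" if x: "x \<in> FC A" for x
  proof -
    have X: "?t `` {x} \<in> FC A // ?t" using x by (rule quotientI)
    have "(x, SOME z. z \<in> ?t `` {x}) \<in> ?t" using class_some(1)[OF R X] by simp
    then have "(f (SOME z. z \<in> ?t `` {x}), f x) \<in> ?t'" by (auto intro: ft ccsym)
    then show ?thesis unfolding F_def using eq' by (simp add: equiv_class_eq)
  qed
  have inj: "inj_on F (FC A // ?t)"
  proof (rule inj_onI)
    fix X Y assume X: "X \<in> FC A // ?t" and Y: "Y \<in> FC A // ?t" and e: "F X = F Y"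
    obtain x where x: "x \<in> FC A" "X = ?t `` {x}" using X by (auto elim: quotientE)
    obtain y where y: "y \<in> FC A" "Y = ?t `` {y}" using Y by (auto elim: quotientE)
    have "?t' `` {f x} = ?t' `` {f y}" using e x y Fc by simp
    then have "(f x, f y) \<in> ?t'" using eq' fC x y by (subst (asm) eq_equiv_class_iff) auto
    then have "(g (f x), g (f y)) \<in> ?t" by (rule gt)
    then have "(x, y) \<in> ?t" using gf[OF x(1)] gf[OF y(1)] by (meson ccsym cctrans)
    then show "X = Y" using x y eq by (simp add: equiv_class_eq)
  qed
  have img: "F ` (FC A // ?t) = FC A' // ?t'"
  proof
    show "F ` (FC A // ?t) \<subseteq> FC A' // ?t'"
    proof
      fix Z assume "Z \<in> F ` (FC A // ?t)"
      then obtain x where x: "x \<in> FC A" "Z = F (?t `` {x})" by (auto elim: quotientE)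
      then show "Z \<in> FC A' // ?t'" using Fc[OF x(1)] quotientI[OF fC[OF x(1)]] by simp
    qed
  next
    show "FC A' // ?t' \<subseteq> F ` (FC A // ?t)"
    proof
      fix Z assume "Z \<in> FC A' // ?t'"
      then obtain u where u: "u \<in> FC A'" "Z = ?t' `` {u}" by (auto elim: quotientE)
      have "F (?t `` {g u}) = ?t' `` {f (g u)}" using Fc gC u by simp
      also have "\<dots> = Z" using fg[OF u(1)] u eq' by (simp add: equiv_class_eq)
      finally show "Z \<in> F ` (FC A // ?t)" using gC[OF u(1)] by (metis image_eqI quotientI)
    qed
  qed
  have hom: "F (mop (quotient_magma (free_magma A) ?t) X Y) = mop (quotient_magma (free_magma A') ?t') (F X) (F Y)"
    if X: "X \<in> FC A // ?t" and Y: "Y \<in> FC A // ?t" for X Y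
  proof -
    obtain x where x: "x \<in> FC A" "X = ?t `` {x}" using X by (auto elim: quotientE)
    obtain y where y: "y \<in> FC A" "Y = ?t `` {y}" using Y by (auto elim: quotientE)
    have Oxy: "Op x y \<in> FC A" using x y by simp
    have "F (mop (quotient_magma (free_magma A) ?t) X Y) = ?t' `` {f (Op x y)}"
      using mop_class[OF R x(1) y(1)] x y Fc[OF Oxy] by simp
    also have "\<dots> = mop (quotient_magma (free_magma A') ?t') (?t' `` {f x}) (?t' `` {f y})"
      using mop_class[OF R' fC[OF x(1)] fC[OF y(1)]] hf by simp
    finally show ?thesis using x y Fc by simp
  qed
  show ?thesis unfolding magma_iso_def using inj img hom
    by (auto simp: bij_betw_def intro!: exI[of _ F])
qed



primrec subst :: "('a \<Rightarrow> 'a fm) \<Rightarrow> 'a fm \<Rightarrow> 'a fm" where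
  "subst s (Gen a) = s a"
| "subst s (Op x y) = Op (subst s x) (subst s y)"

lemma letters_ne: "letters u \<noteq> {}"
  by (induction u) auto

lemma subst_notin: "a \<notin> letters u \<Longrightarrow> subst (Gen(a:=t)) u = u"
  by (induction u) auto

lemma letters_subst: "a \<notin> letters t \<Longrightarrow> letters (subst (Gen(a:=t)) u) \<subseteq> (letters u - {a}) \<union> letters t"
  by (induction u) auto

definition has :: "'a \<Rightarrow> 'a fm \<Rightarrow> 'a fm \<times> 'a fm \<Rightarrow> bool" where
  "has a t p \<longleftrightarrow> p = (Gen a, t) \<or> p = (t, Gen a)"

lemma has_cc: "p \<in> R \<Longrightarrow> has a t p \<Longrightarrow> (Gen a, t) \<in> cc A R"
  unfolding has_def by (auto intro: ccbase ccsym)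

lemma subst_cc:
  assumes "(Gen a, t) \<in> cc A R" shows "letters u \<subseteq> A \<Longrightarrow> (u, subst (Gen(a:=t)) u) \<in> cc A R"
proof (induction u)
  case (Gen b) then show ?case using assms by (cases "b = a") (auto intro: ccrefl)
next
  case (Op x y) then show ?case by (auto intro: cccomp)
qed

lemma elim_step:
  assumes R: "R \<subseteq> FC A \<times> FC A" and p: "p \<in> R" and h: "has a t p" and na: "a \<notin> letters t"
  defines "f \<equiv> subst (Gen(a:=t))"
  defines "R' \<equiv> (\<lambda>(u,v). (f u, f v)) ` R"
  shows "R' \<subseteq> FC (A-{a}) \<times> FC (A-{a})" "magma_iso (presented A R) (presented (A-{a}) R')"
proof -
  have tA: "letters t \<subseteq> A" and aA: "a \<in> A" using R p h unfolding has_def by auto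
  have at: "(Gen a, t) \<in> cc A R" using has_cc[OF p h] .
  have fC: "f u \<in> FC (A-{a})" if "u \<in> FC A" for u
    using letters_subst[OF na, of u] that tA na unfolding f_def by auto
  show R': "R' \<subseteq> FC (A-{a}) \<times> FC (A-{a})"
  proof
    fix q assume "q \<in> R'"
    then obtain u v where q: "q = (f u, f v)" "(u,v) \<in> R" unfolding R'_def by auto
    then have "u \<in> FC A" "v \<in> FC A" using R by auto
    then show "q \<in> FC (A-{a}) \<times> FC (A-{a})" using q fC by blast
  qed
  have hf: "f (Op x y) = Op (f x) (f y)" for x y unfolding f_def by simp
  have ft0: "(f (fst q), f (snd q)) \<in> cc (A-{a}) R'" if "q \<in> cc A R" for q
    using that
  proof (induction rule: cc.induct)
    case (ccbase p)
    have "(f (fst p), f (snd p)) \<in> R'" unfolding R'_def using ccbase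
      by (auto intro!: image_eqI[of _ _ p] split: prod.splits)
    then show ?case by (rule cc.ccbase)
  next
    case (ccrefl u) then show ?case using fC by (auto intro: cc.ccrefl)
  next
    case (ccsym u v) then show ?case by (auto intro: cc.ccsym)
  next
    case (cctrans u v w) then show ?case by (auto intro: cc.cctrans)
  next
    case (cccomp x y x' y') then show ?case by (auto simp: hf intro: cc.cccomp)
  next
    case (ccdl x x' y y') then show ?case by (auto simp: hf intro: cc.ccdl)
  next
    case (ccdr x x' y y') then show ?case by (auto simp: hf intro: cc.ccdr)
  qed
  have ft: "(f u, f v) \<in> cc (A-{a}) R'" if "(u,v) \<in> cc A R" for u v
    using ft0[OF that] by simp
  have uf: "(u, f u) \<in> cc A R" if "u \<in> FC A" for u
    using subst_cc[OF at] that unfolding f_def by auto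
  have gt0: "q \<in> cc A R" if "q \<in> cc (A-{a}) R'" for q
    using that
  proof (induction rule: cc.induct)
    case (ccbase q)
    then obtain u0 v0 where q: "q = (f u0, f v0)" "(u0,v0) \<in> R" unfolding R'_def by auto
    then have "(u0, v0) \<in> cc A R" "u0 \<in> FC A" "v0 \<in> FC A" using R by (auto intro: cc.ccbase)
    then show ?case using q uf by (metis cc.ccsym cc.cctrans)
  next
    case (ccrefl u) then show ?case by (auto intro: cc.ccrefl)
  qed (auto intro: cc.intros)
  have gt: "(u, v) \<in> cc A R" if "(u,v) \<in> cc (A-{a}) R'" for u v
    using gt0[OF that] .
  have "magma_iso (quotient_magma (free_magma A) (cc A R)) (quotient_magma (free_magma (A-{a})) (cc (A-{a}) R'))"
  proof (rule iso_quot[OF R R', where f = f and g = id])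
    show "f (Op x y) = Op (f x) (f y)" for x y by (rule hf)
    show "u \<in> FC A \<Longrightarrow> f u \<in> FC (A - {a})" for u by (rule fC)
    show "u \<in> FC (A - {a}) \<Longrightarrow> id u \<in> FC A" for u by auto
    show "(u, v) \<in> cc A R \<Longrightarrow> (f u, f v) \<in> cc (A - {a}) R'" for u v by (rule ft)
    show "(u, v) \<in> cc (A - {a}) R' \<Longrightarrow> (id u, id v) \<in> cc A R" for u v using gt by simp
    show "u \<in> FC A \<Longrightarrow> (id (f u), u) \<in> cc A R" for u using uf by (auto intro: ccsym)
    show "u \<in> FC (A - {a}) \<Longrightarrow> (f (id u), u) \<in> cc (A - {a}) R'" for u
    proof -
      assume u: "u \<in> FC (A - {a})"
      then have "a \<notin> letters u" by auto
      then have "f u = u" unfolding f_def by (rule subst_notin)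
      then show ?thesis using u by (simp add: ccrefl)
    qed
  qed
  then show "magma_iso (presented A R) (presented (A-{a}) R')"
    unfolding presented_def using ccg[OF R] ccg[OF R'] by simp
qed

definition pm :: "'a fm \<times> 'a fm \<Rightarrow> nat" where "pm p = max (size (fst p)) (size (snd p))"
definition W :: "('a fm \<times> 'a fm) set \<Rightarrow> nat" where "W R = (\<Sum>p\<in>R. 3 ^ pm p)"

lemma W_dec:
  assumes "finite R" "p \<in> R" "finite Q" "card Q \<le> 2" "\<forall>q\<in>Q. pm q < pm p"
  shows "W (R - {p} \<union> Q) < W R"
proof -
  have "W (R - {p} \<union> Q) \<le> W (R - {p}) + W Q"
    unfolding W_def using assms by (simp add: sum_Un_nat)
  moreover have "W R = 3 ^ pm p + W (R - {p})"
    unfolding W_def using assms by (simp add: sum.remove)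
  moreover have "W Q < 3 ^ pm p"
  proof (cases "Q = {}")
    case True then show ?thesis by (simp add: W_def)
  next
    case False
    then obtain q where "q \<in> Q" by auto
    then have m: "pm p \<ge> 1" using assms by fastforce
    have "\<forall>q\<in>Q. (3::nat) ^ pm q \<le> 3 ^ (pm p - 1)"
      using assms(5) by (auto intro: power_increasing)
    then have "W Q \<le> card Q * 3 ^ (pm p - 1)"
      using sum_bounded_above[of Q "\<lambda>q. (3::nat) ^ pm q" "3 ^ (pm p - 1)"] by (simp add: W_def)
    also have "\<dots> \<le> 2 * 3 ^ (pm p - 1)" using assms by simp
    also have "\<dots> < 3 * 3 ^ (pm p - 1)" by simp
    also have "\<dots> = 3 ^ pm p" using m by (cases "pm p") auto
    finally show ?thesis .
  qed
  ultimately show ?thesis by linarith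
qed



lemma size_pos: "0 < size (u :: 'a fm)"
  by (cases u) auto

lemma card2: "card {a, b} \<le> 2"
  by (cases "a = b") auto

lemma caseA:
  assumes fin: "finite R" and R: "R \<subseteq> FC A \<times> FC A" and p: "p \<in> R" and e: "fst p = snd p"
  shows "\<exists>R'. finite R' \<and> R' \<subseteq> FC A \<times> FC A \<and> W R' < W R \<and> cc A R' = cc A R"
proof (intro exI conjI)
  let ?R' = "R - {p} \<union> {}"
  show "finite ?R'" using fin by simp
  show "?R' \<subseteq> FC A \<times> FC A" using R by auto
  show "W ?R' < W R" by (rule W_dec) (use fin p in auto)
  have "R \<subseteq> cc A ?R'"
  proof
    fix q assume q: "q \<in> R"
    show "q \<in> cc A ?R'"
    proof (cases "q = p")
      case True
      obtain u v where pv: "p = (u,v)" by (cases p)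
      then have "u = v" "u \<in> FC A" using e R p by auto
      then show ?thesis using True pv by (simp add: ccrefl)
    qed (use q in \<open>auto intro: ccbase\<close>)
  qed
  moreover have "?R' \<subseteq> cc A R" by (auto intro: ccbase)
  ultimately show "cc A ?R' = cc A R" using cc_eqI by blast
qed

lemma caseB:
  assumes fin: "finite R" and R: "R \<subseteq> FC A \<times> FC A" and p: "(Op x y, Op x' y') \<in> R"
  shows "\<exists>R'. finite R' \<and> R' \<subseteq> FC A \<times> FC A \<and> W R' < W R \<and> cc A R' = cc A R"
proof (intro exI conjI)
  let ?p = "(Op x y, Op x' y')"
  let ?R' = "R - {?p} \<union> {(x,x'),(y,y')}"
  show "finite ?R'" using fin by simp
  have "(Op x y, Op x' y') \<in> FC A \<times> FC A" using R p by blast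
  then have "Op x y \<in> FC A" "Op x' y' \<in> FC A" by auto
  then show "?R' \<subseteq> FC A \<times> FC A" using R by auto
  show "W ?R' < W R" by (rule W_dec) (use fin p in \<open>auto simp: pm_def card2\<close>)
  have "R \<subseteq> cc A ?R'"
  proof
    fix q assume q: "q \<in> R"
    show "q \<in> cc A ?R'"
    proof (cases "q = ?p")
      case True
      have "(x,x') \<in> cc A ?R'" "(y,y') \<in> cc A ?R'" by (auto intro: ccbase)
      then show ?thesis using True by (simp add: cccomp)
    qed (use q in \<open>auto intro: ccbase\<close>)
  qed
  moreover have "?R' \<subseteq> cc A R"
  proof -
    have "?p \<in> cc A R" using p by (rule ccbase)
    then have "(x,x') \<in> cc A R" "(y,y') \<in> cc A R" by (auto intro: ccdl ccdr)
    then show ?thesis by (auto intro: ccbase)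
  qed
  ultimately show "cc A ?R' = cc A R" using cc_eqI by blast
qed

lemma caseD:
  assumes fin: "finite R" and R: "R \<subseteq> FC A \<times> FC A" and p1: "p1 \<in> R" and p2: "p2 \<in> R"
    and ne: "p1 \<noteq> p2" and h1: "has a (Op t1 t2) p1" and h2: "has a (Op s1 s2) p2"
    and sz: "size (Op t1 t2) \<le> size (Op s1 s2)"
  shows "\<exists>R'. finite R' \<and> R' \<subseteq> FC A \<times> FC A \<and> W R' < W R \<and> cc A R' = cc A R"
proof (intro exI conjI)
  let ?R' = "R - {p2} \<union> {(t1,s1),(t2,s2)}"
  show "finite ?R'" using fin by simp
  have "p1 \<in> FC A \<times> FC A" "p2 \<in> FC A \<times> FC A" using R p1 p2 by blast+
  then have "Op t1 t2 \<in> FC A" "Op s1 s2 \<in> FC A" using h1 h2 unfolding has_def by auto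
  then show "?R' \<subseteq> FC A \<times> FC A" using R by auto
  have pm2: "pm p2 = size (Op s1 s2)" using h2 unfolding has_def pm_def by auto
  show "W ?R' < W R" by (rule W_dec) (use fin p2 sz pm2 in \<open>auto simp: pm_def card2\<close>)
  have "R \<subseteq> cc A ?R'"
  proof
    fix q assume q: "q \<in> R"
    show "q \<in> cc A ?R'"
    proof (cases "q = p2")
      case True
      have "p1 \<in> ?R'" using p1 ne by auto
      then have "(Gen a, Op t1 t2) \<in> cc A ?R'" using h1 by (rule has_cc)
      moreover have "(t1,s1) \<in> cc A ?R'" "(t2,s2) \<in> cc A ?R'" by (auto intro: ccbase)
      ultimately have "(Gen a, Op s1 s2) \<in> cc A ?R'" by (meson cccomp cctrans)
      then show ?thesis using True h2 unfolding has_def by (auto intro: ccsym)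
    qed (use q in \<open>auto intro: ccbase\<close>)
  qed
  moreover have "?R' \<subseteq> cc A R"
  proof -
    have "(Gen a, Op t1 t2) \<in> cc A R" "(Gen a, Op s1 s2) \<in> cc A R"
      using has_cc[OF p1 h1] has_cc[OF p2 h2] by auto
    then have "(Op t1 t2, Op s1 s2) \<in> cc A R" by (meson ccsym cctrans)
    then have "(t1,s1) \<in> cc A R" "(t2,s2) \<in> cc A R" by (auto intro: ccdl ccdr)
    then show ?thesis by (auto intro: ccbase)
  qed
  ultimately show "cc A ?R' = cc A R" using cc_eqI by blast
qed

lemma caseE:
  assumes fin: "finite R" and R: "R \<subseteq> FC A \<times> FC A" and p1: "p1 \<in> R" and p2: "p2 \<in> R"
    and ab: "a \<noteq> b" and h1: "has a (Op t1 t2) p1" and h2: "has b (Op t1 t2) p2"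
  shows "\<exists>R'. finite R' \<and> R' \<subseteq> FC A \<times> FC A \<and> W R' < W R \<and> cc A R' = cc A R"
proof (intro exI conjI)
  let ?T = "Op t1 t2"
  let ?R' = "R - {p2} \<union> {(Gen b, Gen a)}"
  have ne: "p1 \<noteq> p2" using h1 h2 ab unfolding has_def by auto
  show "finite ?R'" using fin by simp
  have "p1 \<in> FC A \<times> FC A" "p2 \<in> FC A \<times> FC A" using R p1 p2 by blast+
  then have "a \<in> A" "b \<in> A" using h1 h2 unfolding has_def by auto
  then show "?R' \<subseteq> FC A \<times> FC A" using R by auto
  have pm2: "pm p2 = size ?T" using h2 unfolding has_def pm_def by auto
  have "pm (Gen b, Gen a) < pm p2" using pm2 size_pos[of t1] by (simp add: pm_def[of "(Gen b, Gen a)"])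
  then show "W ?R' < W R" by (intro W_dec) (use fin p2 in auto)
  have "R \<subseteq> cc A ?R'"
  proof
    fix q assume q: "q \<in> R"
    show "q \<in> cc A ?R'"
    proof (cases "q = p2")
      case True
      have "p1 \<in> ?R'" using p1 ne by auto
      then have "(Gen a, ?T) \<in> cc A ?R'" using h1 by (rule has_cc)
      moreover have "(Gen b, Gen a) \<in> cc A ?R'" by (auto intro: ccbase)
      ultimately have "(Gen b, ?T) \<in> cc A ?R'" by (meson cctrans)
      then show ?thesis using True h2 unfolding has_def by (auto intro: ccsym)
    qed (use q in \<open>auto intro: ccbase\<close>)
  qed
  moreover have "?R' \<subseteq> cc A R"
  proof -
    have "(Gen a, ?T) \<in> cc A R" "(Gen b, ?T) \<in> cc A R"
      using has_cc[OF p1 h1] has_cc[OF p2 h2] by auto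
    then have "(Gen b, Gen a) \<in> cc A R" by (meson ccsym cctrans)
    then show ?thesis by (auto intro: ccbase)
  qed
  ultimately show "cc A ?R' = cc A R" using cc_eqI by blast
qed



lemma final:
  assumes R: "R \<subseteq> FC A \<times> FC A"
    and nA: "\<forall>p\<in>R. fst p \<noteq> snd p"
    and nB: "\<forall>x y x' y'. (Op x y, Op x' y') \<notin> R"
    and nC: "\<forall>a t p. p \<in> R \<longrightarrow> has a t p \<longrightarrow> a \<in> letters t"
    and nD: "\<forall>a t1 t2 s1 s2 p1 p2. p1 \<in> R \<longrightarrow> p2 \<in> R \<longrightarrow> has a (Op t1 t2) p1 \<longrightarrow> has a (Op s1 s2) p2 \<longrightarrow> p1 = p2"
    and nE: "\<forall>a b t1 t2 p1 p2. p1 \<in> R \<longrightarrow> p2 \<in> R \<longrightarrow> has a (Op t1 t2) p1 \<longrightarrow> has b (Op t1 t2) p2 \<longrightarrow> a = b"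
  shows "\<exists>\<phi>. E_form A \<phi> \<and> cc A R = cc A (graph_rel A \<phi>)"
proof -
  have form: "\<exists>a t1 t2. has a (Op t1 t2) p" if p: "p \<in> R" for p
  proof -
    obtain u v where pv: "p = (u,v)" by (cases p)
    show ?thesis
    proof (cases u)
      case (Gen a) note u = this
      show ?thesis
      proof (cases v)
        case (Gen b)
        then have "has a (Gen b) p" using pv u by (simp add: has_def)
        then have "a = b" using nC p by fastforce
        then show ?thesis using nA p pv u Gen by auto
      next
        case (Op v1 v2) then show ?thesis using pv u by (auto simp: has_def)
      qed
    next
      case (Op u1 u2) note u = this
      show ?thesis
      proof (cases v)
        case (Gen b) then show ?thesis using pv u by (auto simp: has_def)
      next
        case (Op v1 v2) then show ?thesis using pv u nB p by auto
      qed
    qed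
  qed
  have comp: "\<exists>t1 t2. t = Op t1 t2" if p: "p \<in> R" and h: "has a t p" for p a t
  proof -
    obtain b t1 t2 where "has b (Op t1 t2) p" using form[OF p] by blast
    then show ?thesis using h unfolding has_def by auto
  qed
  have uniq: "t = s" if u: "p1 \<in> R" "p2 \<in> R" "has a t p1" "has a s p2" for p1 p2 a t s
  proof -
    obtain t1 t2 where t: "t = Op t1 t2" using comp u(1,3) by blast
    obtain s1 s2 where s: "s = Op s1 s2" using comp u(2,4) by blast
    have "p1 = p2" using nD u t s by blast
    then show ?thesis using u t s unfolding has_def by auto
  qed
  define \<phi> where "\<phi> a = (if \<exists>t. \<exists>p\<in>R. has a t p then SOME t. \<exists>p\<in>R. has a t p else Gen a)" for a
  have phi_has: "\<phi> a = t" if "p \<in> R" "has a t p" for p a t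
  proof -
    have ex: "\<exists>t. \<exists>p\<in>R. has a t p" using that by blast
    then have "\<exists>p\<in>R. has a (SOME t. \<exists>p\<in>R. has a t p) p" by (rule someI_ex)
    then obtain q where "q \<in> R" "has a (SOME t. \<exists>p\<in>R. has a t p) q" by blast
    then have "(SOME t. \<exists>p\<in>R. has a t p) = t" using uniq that by blast
    then show ?thesis unfolding \<phi>_def using ex by simp
  qed
  have phi_none: "\<phi> a = Gen a" if "\<not> (\<exists>t. \<exists>p\<in>R. has a t p)" for a
    unfolding \<phi>_def using that by simp
  have Ain: "a \<in> A \<and> t \<in> FC A" if "p \<in> R" "has a t p" for p a t
  proof -
    have "p \<in> FC A \<times> FC A" using R that by blast
    then show ?thesis using that(2) unfolding has_def by auto
  qed
  have ef: "E_form A \<phi>"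
    unfolding E_form_def
  proof (intro conjI ballI)
    fix a assume a: "a \<in> A"
    show "\<phi> a \<in> carrier (free_magma A)"
    proof (cases "\<exists>t. \<exists>p\<in>R. has a t p")
      case True
      then obtain t p where "p \<in> R" "has a t p" by blast
      then show ?thesis using phi_has Ain by simp
    next
      case False then show ?thesis using phi_none a by simp
    qed
    show "a \<in> letters (\<phi> a)"
    proof (cases "\<exists>t. \<exists>p\<in>R. has a t p")
      case True
      then obtain t p where "p \<in> R" "has a t p" by blast
      then show ?thesis using phi_has nC by metis
    next
      case False then show ?thesis using phi_none by simp
    qed
  next
    show "inj_on \<phi> A"
    proof (rule inj_onI)
      fix a b assume a: "a \<in> A" and b: "b \<in> A" and e: "\<phi> a = \<phi> b"
      show "a = b"
      proof (cases "\<exists>t. \<exists>p\<in>R. has a t p")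
        case True
        then obtain t p where tp: "p \<in> R" "has a t p" by blast
        then have pa: "\<phi> a = t" by (rule phi_has)
        obtain t1 t2 where t: "t = Op t1 t2" using comp tp by blast
        show ?thesis
        proof (cases "\<exists>t. \<exists>p\<in>R. has b t p")
          case True
          then obtain s q where sq: "q \<in> R" "has b s q" by blast
          then have "\<phi> b = s" by (rule phi_has)
          then have "has b (Op t1 t2) q" using sq e pa t by simp
          then show ?thesis using nE tp sq t by blast
        next
          case False then show ?thesis using phi_none e pa t by simp
        qed
      next
        case False
        note fa = this
        show ?thesis
        proof (cases "\<exists>t. \<exists>p\<in>R. has b t p")
          case True
          then obtain s q where sq: "q \<in> R" "has b s q" by blast
          then have pb: "\<phi> b = s" by (rule phi_has)
          obtain s1 s2 where "s = Op s1 s2" using comp sq by blast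
          then show ?thesis using phi_none[OF fa] e pb by simp
        next
          case False then show ?thesis using phi_none fa e by simp
        qed
      qed
    qed
  qed
  have "R \<subseteq> cc A (graph_rel A \<phi>)"
  proof
    fix p assume p: "p \<in> R"
    then obtain a t1 t2 where h: "has a (Op t1 t2) p" using form by blast
    have "a \<in> A" using Ain p h by blast
    then have "(Gen a, \<phi> a) \<in> graph_rel A \<phi>" unfolding graph_rel_def by blast
    then have "(Gen a, Op t1 t2) \<in> cc A (graph_rel A \<phi>)" using phi_has[OF p h] by (auto intro: ccbase)
    then show "p \<in> cc A (graph_rel A \<phi>)" using h unfolding has_def by (auto intro: ccsym)
  qed
  moreover have "graph_rel A \<phi> \<subseteq> cc A R"
  proof
    fix q assume "q \<in> graph_rel A \<phi>"
    then obtain a where q: "q = (Gen a, \<phi> a)" "a \<in> A" unfolding graph_rel_def by blast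
    show "q \<in> cc A R"
    proof (cases "\<exists>t. \<exists>p\<in>R. has a t p")
      case True
      then obtain t p where tp: "p \<in> R" "has a t p" by blast
      then show ?thesis using q phi_has[OF tp] has_cc[OF tp] by simp
    next
      case False then show ?thesis using q phi_none[OF False] by (simp add: ccrefl)
    qed
  qed
  ultimately show ?thesis using ef cc_eqI by blast
qed

lemma graph_sub: "E_form A \<phi> \<Longrightarrow> graph_rel A \<phi> \<subseteq> FC A \<times> FC A"
  unfolding E_form_def graph_rel_def by auto

lemma iso_refl: "magma_iso M M"
  unfolding magma_iso_def by (rule exI[of _ id]) simp

lemma main:
  "\<forall>(A::'a set) R. k = (card A, W R) \<longrightarrow> finite A \<longrightarrow> A \<noteq> {} \<longrightarrow> finite R \<longrightarrow> R \<subseteq> FC A \<times> FC A \<longrightarrow>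
     (\<exists>(B::'a set) \<phi>. B \<noteq> {} \<and> E_form B \<phi> \<and> magma_iso (presented A R) (E_magma B \<phi>))"
proof (induction k rule: less_induct)
  case (less k)
  show ?case
  proof (intro allI impI)
    fix A :: "'a set" and R
    assume k: "k = (card A, W R)" and fA: "finite A" and nA: "A \<noteq> {}" and fR: "finite R"
      and R: "R \<subseteq> FC A \<times> FC A"
    let ?thesis = "\<exists>(B::'a set) \<phi>. B \<noteq> {} \<and> E_form B \<phi> \<and> magma_iso (presented A R) (E_magma B \<phi>)"
    have same: ?thesis if ex: "\<exists>R'. finite R' \<and> R' \<subseteq> FC A \<times> FC A \<and> W R' < W R \<and> cc A R' = cc A R"
    proof -
      obtain R' where R': "finite R'" "R' \<subseteq> FC A \<times> FC A" "W R' < W R" "cc A R' = cc A R"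
        using ex by blast
      have "(card A, W R') < k" using k R'(3) by simp
      note ih = less.IH[OF this]
      have ih2: "(card A, W R') = (card A, W R') \<longrightarrow> finite A \<longrightarrow> A \<noteq> {} \<longrightarrow> finite R' \<longrightarrow> R' \<subseteq> FC A \<times> FC A \<longrightarrow>
     (\<exists>(B::'a set) \<phi>. B \<noteq> {} \<and> E_form B \<phi> \<and> magma_iso (presented A R') (E_magma B \<phi>))"
        by (rule spec[OF spec[OF ih, of A], of R'])
      have ex2: "\<exists>(B::'a set) \<phi>. B \<noteq> {} \<and> E_form B \<phi> \<and> magma_iso (presented A R') (E_magma B \<phi>)"
        by (rule ih2[rule_format, OF refl fA nA R'(1,2)])
      have eq: "presented A R' = presented A R"
        unfolding presented_def using ccg[OF R] ccg[OF R'(2)] R'(4) by simp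
      show ?thesis using ex2 unfolding eq .
    qed
    show ?thesis
    proof (cases "\<exists>p\<in>R. fst p = snd p")
      case True
      then obtain p where "p \<in> R" "fst p = snd p" by blast
      then show ?thesis by (rule same[OF caseA[OF fR R]])
    next
      case nA': False
      show ?thesis
      proof (cases "\<exists>x y x' y'. (Op x y, Op x' y') \<in> R")
        case True
        then obtain x y x' y' where "(Op x y, Op x' y') \<in> R" by blast
        then show ?thesis by (rule same[OF caseB[OF fR R]])
      next
        case nB: False
        show ?thesis
        proof (cases "\<exists>a t p. p \<in> R \<and> has a t p \<and> a \<notin> letters t")
          case True
          then obtain a t p where p: "p \<in> R" "has a t p" "a \<notin> letters t" by blast
          define f where "f = subst (Gen(a:=t))"
          define R' where "R' = (\<lambda>(u,v). (f u, f v)) ` R"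
          have el: "R' \<subseteq> FC (A-{a}) \<times> FC (A-{a})" "magma_iso (presented A R) (presented (A-{a}) R')"
            using elim_step[OF R p] unfolding R'_def f_def by auto
          have "p \<in> FC A \<times> FC A" using R p by blast
          then have aA: "a \<in> A" and tA: "letters t \<subseteq> A" using p(2) unfolding has_def by auto
          have ne: "A - {a} \<noteq> {}" using tA p(3) letters_ne[of t] by blast
          have "card A > 0" using fA aA card_gt_0_iff by blast
          then have "(card (A-{a}), W R') < k" using k fA aA by (simp add: card_Diff1_less)
          note ih = less.IH[OF this]
          have ih2: "(card (A-{a}), W R') = (card (A-{a}), W R') \<longrightarrow> finite (A-{a}) \<longrightarrow> A-{a} \<noteq> {} \<longrightarrow> finite R' \<longrightarrow> R' \<subseteq> FC (A-{a}) \<times> FC (A-{a}) \<longrightarrow>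
     (\<exists>(B::'a set) \<phi>. B \<noteq> {} \<and> E_form B \<phi> \<and> magma_iso (presented (A-{a}) R') (E_magma B \<phi>))"
            by (rule spec[OF spec[OF ih, of "A-{a}"], of R'])
          have fR': "finite R'" unfolding R'_def using fR by simp
          have ex2: "\<exists>(B::'a set) \<phi>. B \<noteq> {} \<and> E_form B \<phi> \<and> magma_iso (presented (A-{a}) R') (E_magma B \<phi>)"
            using fA by (intro ih2[rule_format, OF refl _ ne fR' el(1)]) simp
          then obtain B :: "'a set" and \<phi> where B: "B \<noteq> {}" "E_form B \<phi>" "magma_iso (presented (A-{a}) R') (E_magma B \<phi>)"
            by auto
          have "magma_iso (presented A R) (E_magma B \<phi>)" using el(2) B(3) by (rule iso_trans)
          then show ?thesis using B(1,2) by (intro exI conjI)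
        next
          case nC: False
          show ?thesis
          proof (cases "\<exists>a t1 t2 s1 s2 p1 p2. p1 \<in> R \<and> p2 \<in> R \<and> p1 \<noteq> p2 \<and> has a (Op t1 t2) p1 \<and> has a (Op s1 s2) p2")
            case True
            then obtain a t1 t2 s1 s2 p1 p2 where h: "p1 \<in> R" "p2 \<in> R" "p1 \<noteq> p2" "has a (Op t1 t2) p1" "has a (Op s1 s2) p2"
              by blast
            show ?thesis
            proof (cases "size (Op t1 t2) \<le> size (Op s1 s2)")
              case True then show ?thesis by (rule same[OF caseD[OF fR R h(1,2,3,4,5)]])
            next
              case False
              then have "size (Op s1 s2) \<le> size (Op t1 t2)" by simp
              then show ?thesis by (rule same[OF caseD[OF fR R h(2,1) h(3)[symmetric] h(5,4)]])
            qed
          next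
            case nD: False
            show ?thesis
            proof (cases "\<exists>a b t1 t2 p1 p2. p1 \<in> R \<and> p2 \<in> R \<and> a \<noteq> b \<and> has a (Op t1 t2) p1 \<and> has b (Op t1 t2) p2")
              case True
              then obtain a b t1 t2 p1 p2 where h: "p1 \<in> R" "p2 \<in> R" "a \<noteq> b" "has a (Op t1 t2) p1" "has b (Op t1 t2) p2"
                by blast
              show ?thesis by (rule same[OF caseE[OF fR R h]])
            next
              case nE: False
              have c1: "\<forall>p\<in>R. fst p \<noteq> snd p" using nA' by blast
              have c2: "\<forall>x y x' y'. (Op x y, Op x' y') \<notin> R" using nB by blast
              have c3: "\<forall>a t p. p \<in> R \<longrightarrow> has a t p \<longrightarrow> a \<in> letters t" using nC by blast
              have c4: "\<forall>a t1 t2 s1 s2 p1 p2. p1 \<in> R \<longrightarrow> p2 \<in> R \<longrightarrow> has a (Op t1 t2) p1 \<longrightarrow> has a (Op s1 s2) p2 \<longrightarrow> p1 = p2"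
                using nD by blast
              have c5: "\<forall>a b t1 t2 p1 p2. p1 \<in> R \<longrightarrow> p2 \<in> R \<longrightarrow> has a (Op t1 t2) p1 \<longrightarrow> has b (Op t1 t2) p2 \<longrightarrow> a = b"
                using nE by blast
              obtain \<phi> where \<phi>: "E_form A \<phi>" "cc A R = cc A (graph_rel A \<phi>)"
                using final[OF R c1 c2 c3 c4 c5] by blast
              have "presented A R = E_magma A \<phi>"
                unfolding presented_def E_magma_def using ccg[OF R] ccg[OF graph_sub[OF \<phi>(1)]] \<phi>(2) by simp
              then show ?thesis using nA \<phi>(1) iso_refl by metis
            qed
          qed
        qed
      qed
    qed
  qed
qed

theorem theorem8p2:
  shows "(\<forall>(A::'a set) \<phi>. A \<noteq> {} \<and> E_form A \<phi> \<longrightarrow> equidecomposable (E_magma A \<phi>))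
       \<and> (\<forall>M::'m magma. magma M \<and> equidecomposable M \<and> finitely_presented M \<longrightarrow>
            (\<exists>(A::nat set) \<phi>. A \<noteq> {} \<and> E_form A \<phi> \<and> magma_iso M (E_magma A \<phi>)))"
proof (intro conjI allI impI)
  fix A :: "'a set" and \<phi> assume h: "A \<noteq> {} \<and> E_form A \<phi>"
  then have g: "graph_rel A \<phi> \<subseteq> FC A \<times> FC A" using graph_sub by blast
  show "equidecomposable (E_magma A \<phi>)"
    unfolding E_magma_def using ccg[OF g] quot_equidec[OF g] by simp
next
  fix M :: "'m magma" assume h: "magma M \<and> equidecomposable M \<and> finitely_presented M"
  then obtain A :: "nat set" and R where AR: "A \<noteq> {}" "finite A" "finite R"
    "R \<subseteq> carrier (free_magma A) \<times> carrier (free_magma A)" "magma_iso M (presented A R)"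
    unfolding finitely_presented_def by blast
  have R: "R \<subseteq> FC A \<times> FC A" using AR(4) by simp
  obtain B :: "nat set" and \<phi> where B: "B \<noteq> {}" "E_form B \<phi>" "magma_iso (presented A R) (E_magma B \<phi>)"
    using main[of "(card A, W R)", rule_format, OF refl AR(2) AR(1) AR(3) R] by blast
  show "\<exists>(A::nat set) \<phi>. A \<noteq> {} \<and> E_form A \<phi> \<and> magma_iso M (E_magma A \<phi>)"
    using B AR(5) iso_trans by blast
qed


end
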